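(* Let $p,q$ be relatively prime positive integers, and let $\mathcal{T}_{q/p,p/q}$ be the triangle with vertices $(0,0)$, $(p/q,0)$ and $(0,q/p)$. Then $q$ is a quasi-period of the Ehrhart quasipolynomial $I(t)=\#(t\mathcal{T}_{q/p,p/q}\cap\mathbb{Z}^2)$ if and only if \[ p\mid(q^2+1)\qquad\text{and}\qquad \gcd\!\left(\frac{q^2+1}{p},\,p\right)=1. \]
   Context: The Ehrhart function of a rational polygon is a quasipolynomial $\sum_i c_i(t)t^i$ with periodic coefficient functions $c_i$; an integer $q$ is a quasi-period if every $c_i$ is periodic with period $q$. *)

theory Defs
  imports "HOL-Analysis.Analysis"
begin

definition triangle :: "real \<Rightarrow> real \<Rightarrow> (real \<times> real) set" where
  "triangle a b = convex hull {(0,0), (a,0), (0,b)}"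

definition ehrhart :: "(real \<times> real) set \<Rightarrow> nat \<Rightarrow> nat" where
  "ehrhart P t = card {z :: int \<times> int. (real_of_int (fst z), real_of_int (snd z)) \<in> (\<lambda>v. real t *\<^sub>R v) ` P}"

definition quasi_period :: "(nat \<Rightarrow> real) \<Rightarrow> nat \<Rightarrow> bool" where
  "quasi_period f q \<longleftrightarrow>
     (\<exists>(d::nat) (c :: nat \<Rightarrow> nat \<Rightarrow> real).
        (\<forall>i\<le>d. \<forall>t. c i (t + q) = c i t) \<and>
        (\<forall>t\<ge>1. f t = (\<Sum>i\<le>d. c i t * real t ^ i)))"

end

theory Submission
  imports Defs "HOL-Number_Theory.Cong" "HOL-Computational_Algebra.Polynomial"
begin


definition cnt :: "nat \<Rightarrow> nat \<Rightarrow> nat \<Rightarrow> nat" where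
  "cnt p q n = card {(x::nat,y::nat). q^2*x + p^2*y \<le> n}"

lemma tri_mem:
  assumes "a > 0" "b > 0"
  shows "(x,y) \<in> triangle a b \<longleftrightarrow> 0 \<le> x \<and> 0 \<le> y \<and> x/a + y/b \<le> 1"
proof
  assume "(x,y) \<in> triangle a b"
  then obtain u v w where uvw: "0 \<le> u" "0 \<le> v" "0 \<le> w" "u+v+w = 1"
    and e: "(x,y) = u *\<^sub>R (0,0) + v *\<^sub>R (a,0) + w *\<^sub>R (0,b)"
    unfolding triangle_def convex_hull_3 by blast
  from e have "x = v * a" "y = w * b" by auto
  then show "0 \<le> x \<and> 0 \<le> y \<and> x/a + y/b \<le> 1" using assms uvw by auto
next
  assume h: "0 \<le> x \<and> 0 \<le> y \<and> x/a + y/b \<le> 1"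
  have "(x,y) = (1 - x/a - y/b) *\<^sub>R (0,0) + (x/a) *\<^sub>R (a,0) + (y/b) *\<^sub>R (0,b)"
    using assms by auto
  moreover have "0 \<le> 1 - x/a - y/b" "0 \<le> x/a" "0 \<le> y/b" using h assms by auto
  ultimately show "(x,y) \<in> triangle a b"
    unfolding triangle_def convex_hull_3
    by (smt (verit, best) mem_Collect_eq)
qed

lemma scaled_mem:
  assumes "a > 0" "b > 0" "t \<ge> 0"
  shows "(X,Y) \<in> (\<lambda>v. t *\<^sub>R v) ` triangle a b \<longleftrightarrow>
     0 \<le> X \<and> 0 \<le> Y \<and> X/a + Y/b \<le> t"
proof (cases "t = 0")
  case True
  have z: "(0,0) \<in> triangle a b" using tri_mem[OF assms(1,2)] by simp
  show ?thesis
  proof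
    assume "(X,Y) \<in> (\<lambda>v. t *\<^sub>R v) ` triangle a b"
    then have "X = 0" "Y = 0" using True by (auto simp: zero_prod_def)
    then show "0 \<le> X \<and> 0 \<le> Y \<and> X/a + Y/b \<le> t" using True by simp
  next
    assume h: "0 \<le> X \<and> 0 \<le> Y \<and> X/a + Y/b \<le> t"
    have "0 \<le> X/a" "0 \<le> Y/b" using h assms by auto
    then have "X/a = 0" "Y/b = 0" using h True by linarith+
    then have "X = 0" "Y = 0" using assms by auto
    then show "(X,Y) \<in> (\<lambda>v. t *\<^sub>R v) ` triangle a b" using True z
      by (auto simp: image_iff zero_prod_def intro!: bexI[where x="(0,0)"])
  qed
next
  case False
  then have tp: "t > 0" using assms by auto
  have "(X,Y) \<in> (\<lambda>v. t *\<^sub>R v) ` triangle a b \<longleftrightarrow> (X/t, Y/t) \<in> triangle a b"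
  proof
    assume "(X,Y) \<in> (\<lambda>v. t *\<^sub>R v) ` triangle a b"
    then obtain v where "v \<in> triangle a b" "(X,Y) = t *\<^sub>R v" by auto
    moreover then have "v = (X/t, Y/t)" using tp by (cases v) auto
    ultimately show "(X/t, Y/t) \<in> triangle a b" by simp
  next
    assume "(X/t, Y/t) \<in> triangle a b"
    moreover have "(X,Y) = t *\<^sub>R (X/t, Y/t)" using tp by simp
    ultimately show "(X,Y) \<in> (\<lambda>v. t *\<^sub>R v) ` triangle a b" by blast
  qed
  also have "\<dots> \<longleftrightarrow> 0 \<le> X/t \<and> 0 \<le> Y/t \<and> X/t/a + Y/t/b \<le> 1"
    using tri_mem[OF assms(1,2)] by simp
  also have "\<dots> \<longleftrightarrow> 0 \<le> X \<and> 0 \<le> Y \<and> X/a + Y/b \<le> t"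
    using tp assms by (auto simp: field_simps zero_le_divide_iff)
  finally show ?thesis .
qed

lemma ehr:
  fixes p q t :: nat
  assumes "p > 0" "q > 0"
  shows "ehrhart (triangle (real p / real q) (real q / real p)) t = cnt p q (p*q*t)"
proof -
  let ?S = "{z :: int \<times> int. (real_of_int (fst z), real_of_int (snd z)) \<in> (\<lambda>v. real t *\<^sub>R v) ` triangle (real p / real q) (real q / real p)}"
  let ?N = "{(x::nat,y::nat). q^2*x + p^2*y \<le> p*q*t}"
  have key: "?S = (\<lambda>(x,y). (int x, int y)) ` ?N"
  proof (rule set_eqI)
    fix z :: "int \<times> int"
    obtain X Y where z: "z = (X,Y)" by (cases z)
    have "z \<in> ?S \<longleftrightarrow> 0 \<le> real_of_int X \<and> 0 \<le> real_of_int Y \<and>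
        real_of_int X / (real p / real q) + real_of_int Y / (real q / real p) \<le> real t"
      using scaled_mem[of "real p / real q" "real q / real p" "real t"] assms z by simp
    also have "\<dots> \<longleftrightarrow> 0 \<le> X \<and> 0 \<le> Y \<and> real_of_int (q^2*X + p^2*Y) \<le> real_of_int (p*q*t)"
    proof -
      have "real_of_int X / (real p / real q) + real_of_int Y / (real q / real p) \<le> real t
         \<longleftrightarrow> (real_of_int X / (real p / real q) + real_of_int Y / (real q / real p)) * (real p * real q) \<le> real t * (real p * real q)"
        using assms by (simp add: mult_le_cancel_right_pos)
      also have "(real_of_int X / (real p / real q) + real_of_int Y / (real q / real p)) * (real p * real q)
          = real_of_int (q^2*X + p^2*Y)" using assms by (simp add: field_simps power2_eq_square)
      also have "real t * (real p * real q) = real_of_int (p*q*t)" by simp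
      finally show ?thesis by simp
    qed
    also have "\<dots> \<longleftrightarrow> z \<in> (\<lambda>(x,y). (int x, int y)) ` ?N"
    proof
      assume h: "0 \<le> X \<and> 0 \<le> Y \<and> real_of_int (q^2*X + p^2*Y) \<le> real_of_int (p*q*t)"
      then have h2: "q^2*X + p^2*Y \<le> p*q*t" by linarith
      have "(nat X, nat Y) \<in> ?N"
      proof -
        have e: "int (q^2*nat X + p^2*nat Y) = q^2*X + p^2*Y" using h by simp
        have "int (q^2*nat X + p^2*nat Y) \<le> int (p*q*t)" unfolding e by (rule h2)
        then show ?thesis by (simp only: of_nat_le_iff mem_Collect_eq case_prod_conv)
      qed
      then show "z \<in> (\<lambda>(x,y). (int x, int y)) ` ?N" using z h
        by (auto intro!: image_eqI[where x="(nat X, nat Y)"])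
    next
      assume "z \<in> (\<lambda>(x,y). (int x, int y)) ` ?N"
      then obtain x y where xy: "(x,y) \<in> ?N" "X = int x" "Y = int y" using z by auto
      have "real (q^2*x + p^2*y) \<le> real (p*q*t)" using xy(1) by (simp only: of_nat_le_iff mem_Collect_eq case_prod_conv)
      then show "0 \<le> X \<and> 0 \<le> Y \<and> real_of_int (q^2*X + p^2*Y) \<le> real_of_int (p*q*t)"
        using xy by simp
    qed
    finally show "z \<in> ?S \<longleftrightarrow> z \<in> (\<lambda>(x,y). (int x, int y)) ` ?N" .
  qed
  have inj: "inj_on (\<lambda>(x,y). (int x, int y)) ?N" by (auto simp: inj_on_def)
  show ?thesis unfolding ehrhart_def cnt_def key card_image[OF inj] ..
qed



definition cc :: "nat \<Rightarrow> nat \<Rightarrow> nat \<Rightarrow> nat" where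
  "cc p q x = (q^2*x + p - 1) div p"
definition Sset :: "nat \<Rightarrow> nat \<Rightarrow> nat \<Rightarrow> (nat \<times> nat) set" where
  "Sset p q M = {(x::nat,j::nat). 1 \<le> j \<and> cc p q x + p*j \<le> M}"
definition SS :: "nat \<Rightarrow> nat \<Rightarrow> nat \<Rightarrow> nat" where
  "SS p q M = card (Sset p q M)"
definition Fb :: "nat \<Rightarrow> nat \<Rightarrow> nat \<Rightarrow> nat set" where
  "Fb p q r = {x. x < p \<and> cc p q x mod p = r}"

lemma cc_mono: "x \<le> y \<Longrightarrow> cc p q x \<le> cc p q y"
  unfolding cc_def by (intro div_le_mono diff_le_mono add_le_mono1 mult_le_mono2)

lemma cc_p: assumes "p > 0" shows "cc p q p = q^2"
proof -
  have "q^2*p + p - 1 = (p - 1) + q^2*p" using assms by simp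
  have "((p - 1) + q^2*p) div p = q^2 + (p-1) div p" using div_mult_self1[of p "p-1" "q^2"] assms by simp
  then show ?thesis unfolding cc_def using assms by (simp only: \<open>q^2*p + p - 1 = (p - 1) + q^2*p\<close>) simp
qed

lemma cc_0: "p > 0 \<Longrightarrow> cc p q 0 = 0"
  unfolding cc_def by simp

lemma cc_lb: "p > 0 \<Longrightarrow> q > 0 \<Longrightarrow> x div p \<le> cc p q x"
proof -
  assume "p > 0" "q > 0"
  then have "x \<le> q^2*x" by simp
  then have "x \<le> q^2*x + p - 1" using \<open>p > 0\<close> by linarith
  then show ?thesis unfolding cc_def by (rule div_le_mono)
qed

lemma Sset_fin: assumes "p > 0" "q > 0" shows "finite (Sset p q M)"
proof -
  have "Sset p q M \<subseteq> {..<p*(M+1)} \<times> {..M}"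
  proof
    fix z assume "z \<in> Sset p q M"
    then obtain x j where z: "z = (x,j)" "1 \<le> j" "cc p q x + p*j \<le> M" unfolding Sset_def by auto
    have "x div p \<le> M" using cc_lb[OF assms, of x] z by linarith
    then have "x < p*(M+1)" using assms
      by (metis div_less_iff_less_mult le_imp_less_Suc mult.commute Suc_eq_plus1)
    moreover have "j \<le> p*j" using assms by simp
    then have "j \<le> M" using z by linarith
    ultimately show "z \<in> {..<p*(M+1)} \<times> {..M}" using z by auto
  qed
  then show ?thesis by (rule finite_subset) auto
qed

lemma step4:
  assumes "p > 0" "q > 0" "m + 1 < p"
  shows "SS p q (q^2+m+1) = SS p q (q^2+m) + card (Fb p q ((q^2+m+1) mod p))"
proof -
  let ?N = "q^2+m+1"
  define T where "T = {(x::nat,j::nat). 1 \<le> j \<and> cc p q x + p*j = ?N}"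
  have un: "Sset p q ?N = Sset p q (q^2+m) \<union> T" unfolding Sset_def T_def by auto
  have dis: "Sset p q (q^2+m) \<inter> T = {}" unfolding Sset_def T_def by auto
  have finT: "finite T" using Sset_fin[OF assms(1,2), of ?N] un by auto
  have inj: "inj_on fst T"
  proof (rule inj_onI)
    fix a b assume "a \<in> T" "b \<in> T" "fst a = fst b"
    then show "a = b" unfolding T_def using assms(1) by (cases a, cases b) (simp, metis add_left_cancel mult_left_cancel not_gr0)
  qed
  have img: "fst ` T = Fb p q (?N mod p)"
  proof (rule set_eqI, rule iffI)
    fix x assume "x \<in> fst ` T"
    then obtain j where j: "1 \<le> j" "cc p q x + p*j = ?N" unfolding T_def by auto
    have "p \<le> p*j" using j(1) by simp
    then have "cc p q x < q^2" using j(2) assms(3) by linarith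
    then have "x < p" using cc_mono[of p x p q] cc_p[OF assms(1), of q] by (metis not_le not_less)
    moreover have "cc p q x mod p = ?N mod p" using j(2) by (metis mod_mult_self2)
    ultimately show "x \<in> Fb p q (?N mod p)" unfolding Fb_def by simp
  next
    fix x assume "x \<in> Fb p q (?N mod p)"
    then have x: "x < p" "cc p q x mod p = ?N mod p" unfolding Fb_def by auto
    have le: "cc p q x \<le> q^2" using cc_mono[of x p p q] cc_p[OF assms(1), of q] x(1) by simp
    then have "cc p q x < ?N" by simp
    have "p dvd (?N - cc p q x)" using x(2) le
      by (metis \<open>cc p q x < ?N\<close> less_imp_le mod_eq_dvd_iff_nat)
    then obtain j where j: "?N - cc p q x = p*j" by (auto elim: dvdE)
    then have "j \<noteq> 0" using \<open>cc p q x < ?N\<close> by (metis diff_is_0_eq leD mult_0_right)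
    then have "(x,j) \<in> T" unfolding T_def using j \<open>cc p q x < ?N\<close> by auto
    then show "x \<in> fst ` T" by force
  qed
  have "SS p q ?N = SS p q (q^2+m) + card T"
    unfolding SS_def un using dis finT Sset_fin[OF assms(1,2)] by (simp add: card_Un_disjoint)
  also have "card T = card (Fb p q (?N mod p))" using card_image[OF inj] img by simp
  finally show ?thesis .
qed


lemma EC_iff:
  assumes "p > 0" "q > 0"
  shows "(\<forall>m<p. SS p q (q^2+m) = SS p q (q^2) + m) \<longleftrightarrow>
         (\<forall>m. m+1 < p \<longrightarrow> card (Fb p q ((q^2+m+1) mod p)) = 1)"
proof
  assume H: "\<forall>m<p. SS p q (q^2+m) = SS p q (q^2) + m"
  show "\<forall>m. m+1 < p \<longrightarrow> card (Fb p q ((q^2+m+1) mod p)) = 1"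
  proof (intro allI impI)
    fix m assume m: "m+1 < p"
    have a1: "SS p q (q^2+m+1) = SS p q (q^2) + (m+1)" using H[rule_format, of "m+1"] m by (simp add: add.assoc)
    have a2: "SS p q (q^2+m) = SS p q (q^2) + m" using H m by simp
    show "card (Fb p q ((q^2+m+1) mod p)) = 1"
      using step4[OF assms m] a1 a2 by linarith
  qed
next
  assume H: "\<forall>m. m+1 < p \<longrightarrow> card (Fb p q ((q^2+m+1) mod p)) = 1"
  show "\<forall>m<p. SS p q (q^2+m) = SS p q (q^2) + m"
  proof (intro allI impI)
    fix m show "m < p \<Longrightarrow> SS p q (q^2+m) = SS p q (q^2) + m"
    proof (induction m)
      case 0 then show ?case by simp
    next
      case (Suc m)
      then have m: "m + 1 < p" by simp
      have "SS p q (q^2+Suc m) = SS p q (q^2+m+1)" by simp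
      also have "\<dots> = SS p q (q^2+m) + 1" using step4[OF assms m] H m by simp
      also have "\<dots> = SS p q (q^2) + Suc m" using Suc m by simp
      finally show ?case .
    qed
  qed
qed

lemma modinv:
  fixes a n :: nat
  assumes "coprime a n"
  shows "\<exists>u. (a*u) mod n = 1 mod n"
  using cong_solve_coprime_nat[OF assms] unfolding cong_def by simp

lemma fiber_lin:
  fixes p g r :: nat
  assumes "p > 0" "coprime g p" "r < p"
  shows "card {x. x < p \<and> (x*g) mod p = r} = 1"
proof -
  obtain u where u: "(g*u) mod p = 1 mod p" using modinv[OF assms(2)] by blast
  define x0 where "x0 = (u*r) mod p"
  have x0p: "x0 < p" unfolding x0_def using assms(1) by simp
  have "(x0*g) mod p = (u*r*g) mod p" unfolding x0_def by (rule mod_mult_left_eq)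
  also have "u*r*g = g*u*r" by (simp only: ac_simps)
  also have "(g*u*r) mod p = (((g*u) mod p) * r) mod p" by (rule mod_mult_left_eq[symmetric])
  also have "\<dots> = ((1 mod p) * r) mod p" using u by (simp only:)
  also have "\<dots> = (1 * r) mod p" by (rule mod_mult_left_eq)
  also have "\<dots> = r" using assms(3) by simp
  finally have x0r: "(x0*g) mod p = r" .
  have "{x. x < p \<and> (x*g) mod p = r} = {x0}"
  proof (rule set_eqI, rule iffI)
    fix x assume "x \<in> {x. x < p \<and> (x*g) mod p = r}"
    then have x: "x < p" "(x*g) mod p = r" by auto
    have "[x*g = x0*g] (mod p)" unfolding cong_def using x x0r by simp
    then have "[x = x0] (mod p)" using cong_mult_rcancel_nat[OF assms(2)] by blast
    then show "x \<in> {x0}" unfolding cong_def using x x0p by simp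
  next
    fix x assume "x \<in> {x0}" then show "x \<in> {x. x < p \<and> (x*g) mod p = r}" using x0p x0r by simp
  qed
  then show ?thesis by simp
qed

lemma cc_sym:
  assumes "coprime p q" "0 < x" "x < p"
  shows "cc p q x + cc p q (p - x) = q^2 + 1"
proof -
  define A where "A = q^2*x"
  have cp: "coprime p (q^2)" using assms(1) by simp
  have nd: "\<not> p dvd A"
  proof
    assume "p dvd A"
    then have "p dvd x" unfolding A_def using coprime_dvd_mult_right_iff[OF cp] by simp
    then show False using assms(2,3) by (auto dest: dvd_imp_le)
  qed
  have p0: "p > 0" using assms by simp
  have r1: "A mod p \<ge> 1" using nd by (metis dvd_eq_mod_eq_0 less_one not_le)
  have rp: "A mod p < p" using p0 by simp
  have dm: "p * (A div p) + A mod p = A" by simp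
  have c1: "cc p q x = A div p + 1"
    unfolding cc_def A_def[symmetric]
  proof (rule div_nat_eqI)
    have "p * (A div p + 1) = p * (A div p) + p" by simp
    then show "p * (A div p + 1) \<le> A + p - 1" using dm r1 by linarith
    have "p * Suc (A div p + 1) = p * (A div p) + 2*p" by simp
    then show "A + p - 1 < p * Suc (A div p + 1)" using dm rp by linarith
  qed
  have q0: "q > 0"
  proof (rule ccontr)
    assume "\<not> q > 0" then have "p = 1" using assms(1) by simp
    then show False using assms(2,3) by simp
  qed
  have Ale: "A < q^2*p" unfolding A_def using assms(3) p0 q0 by (simp add: nat_mult_less_cancel_disj) 
  then have Adl: "A div p < q^2" using p0 by (simp add: div_less_iff_less_mult)
  have e2: "q^2*(p-x) = q^2*p - A" unfolding A_def by (simp add: diff_mult_distrib2)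
  have c2: "cc p q (p-x) = q^2 - A div p"
    unfolding cc_def e2
  proof (rule div_nat_eqI)
    have "p * (q^2 - A div p) = p*q^2 - p*(A div p)" by (simp add: diff_mult_distrib2)
    moreover have "p*(A div p) \<le> p*q^2" using Adl by simp
    moreover have "p * Suc (q^2 - A div p) = p * (q^2 - A div p) + p" by simp
    moreover have "q^2*p = p*q^2" by simp
    ultimately show "p * (q^2 - A div p) \<le> q^2*p - A + p - 1"
      and "q^2*p - A + p - 1 < p * Suc (q^2 - A div p)" using dm rp Ale r1 by linarith+
  qed
  show ?thesis using c1 c2 Adl by simp
qed


lemma cc_lin:
  assumes "p > 0" "p dvd q^2+1" "x < p"
  shows "cc p q x = x * ((q^2+1) div p)"
proof -
  define Q where "Q = (q^2+1) div p"
  have "q^2+1 = p*Q" unfolding Q_def using assms(2) by simp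
  then have e: "q^2*x + x = p*(x*Q)" by (metis add_mult_distrib mult.commute mult.left_commute mult_1)
  have "(q^2*x + p - 1) div p = x*Q"
  proof (rule div_nat_eqI)
    show "p * (x*Q) \<le> q^2*x + p - 1" using e assms by linarith
    have "p * Suc (x*Q) = p*(x*Q) + p" by simp
    then show "q^2*x + p - 1 < p * Suc (x*Q)" using e assms by linarith
  qed
  then show ?thesis unfolding cc_def Q_def .
qed

lemma card1_mem:
  assumes "card A = 1" "a \<in> A" "b \<in> A" shows "a = b"
proof -
  from assms(1) obtain z where "A = {z}" by (rule card_1_singletonE)
  then show ?thesis using assms(2,3) by simp
qed

lemma card1_ex:
  assumes "card A = 1" obtains a where "a \<in> A"
proof -
  from assms obtain z where "A = {z}" by (rule card_1_singletonE)
  then show ?thesis using that by simp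
qed

lemma NT:
  assumes "p > 0" "q > 0" "coprime p q"
  shows "(\<forall>m. m+1 < p \<longrightarrow> card (Fb p q ((q^2+m+1) mod p)) = 1) \<longleftrightarrow>
         (p dvd q^2+1 \<and> gcd ((q^2+1) div p) p = 1)"
proof (cases "p = 1")
  case True then show ?thesis by simp
next
  case False
  then have p2: "p \<ge> 2" using assms(1) by simp
  show ?thesis
  proof
    assume "p dvd q^2+1 \<and> gcd ((q^2+1) div p) p = 1"
    then have d: "p dvd q^2+1" and g: "coprime ((q^2+1) div p) p" by (auto simp: coprime_iff_gcd_eq_1)
    show "\<forall>m. m+1 < p \<longrightarrow> card (Fb p q ((q^2+m+1) mod p)) = 1"
    proof (intro allI impI)
      fix m assume "m+1 < p"
      have "Fb p q ((q^2+m+1) mod p) = {x. x < p \<and> (x*((q^2+1) div p)) mod p = (q^2+m+1) mod p}"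
        unfolding Fb_def using cc_lin[OF assms(1) d] by auto
      then show "card (Fb p q ((q^2+m+1) mod p)) = 1"
        using fiber_lin[OF assms(1) g, of "(q^2+m+1) mod p"] assms(1) by simp
    qed
  next
    assume H: "\<forall>m. m+1 < p \<longrightarrow> card (Fb p q ((q^2+m+1) mod p)) = 1"
    define R where "R = q^2 mod p"
    have cp: "coprime p (q^2)" using assms(3) by simp
    have R0: "R \<noteq> 0"
    proof
      assume "R = 0"
      then have "p dvd q^2" unfolding R_def by auto
      then have "is_unit p" using coprime_common_divisor[OF cp dvd_refl] by blast
      then show False using p2 by simp
    qed
    have Rp: "R < p" unfolding R_def using assms(1) by simp
    have "card (Fb p q 0) = 1"
    proof -
      have "(p - R - 1) + 1 < p" using R0 Rp by simp
      then have c: "card (Fb p q ((q^2 + (p-R-1) + 1) mod p)) = 1" using H by blast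
      have dm: "p*(q^2 div p) + R = q^2" unfolding R_def by (metis div_mult_mod_eq mult.commute)
      have "p*(q^2 div p + 1) = p*(q^2 div p) + p" by simp
      then have "q^2 + (p-R-1) + 1 = p*(q^2 div p + 1)" using dm R0 Rp by linarith
      then show ?thesis using c by simp
    qed
    moreover have "0 \<in> Fb p q 0" unfolding Fb_def using cc_0[OF assms(1)] assms(1) by simp
    ultimately have F0: "\<And>x. x \<in> Fb p q 0 \<Longrightarrow> x = 0" using card1_mem by metis
    have d: "p dvd q^2+1"
    proof (rule ccontr)
      assume nd: "\<not> p dvd q^2+1"
      have "card (Fb p q ((q^2+0+1) mod p)) = 1" using H[rule_format, of 0] p2 by linarith
      then obtain x where x: "x \<in> Fb p q ((q^2+1) mod p)" using card1_ex by (simp only: add_0_right) blast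
      then have xp: "x < p" and xc: "cc p q x mod p = (q^2+1) mod p" unfolding Fb_def by auto
      have "x \<noteq> 0"
      proof
        assume "x = 0" then have "(q^2+1) mod p = 0" using xc cc_0[OF assms(1)] by simp
        then show False using nd by auto
      qed
      then have s: "cc p q x + cc p q (p-x) = q^2+1" using cc_sym[OF assms(3) _ xp] by simp
      have "[cc p q (p-x) + cc p q x = 0 + cc p q x] (mod p)"
        unfolding cong_def using s xc by (simp add: add.commute)
      then have "[cc p q (p-x) = 0] (mod p)" by (rule cong_add_rcancel_nat[THEN iffD1])
      then have "p - x \<in> Fb p q 0" unfolding Fb_def cong_def using \<open>x \<noteq> 0\<close> xp by simp
      then show False using F0 xp by fastforce
    qed
    define Q where "Q = (q^2+1) div p"
    have "gcd Q p = 1"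
    proof (rule ccontr)
      assume ng: "gcd Q p \<noteq> 1"
      define g where "g = gcd Q p"
      have g0: "g > 0" unfolding g_def using assms(1) by simp
      have g2: "g \<ge> 2" using ng g0 unfolding g_def by linarith
      have gp: "g dvd p" and gQ: "g dvd Q" unfolding g_def by auto
      define x where "x = p div g"
      have xp: "x < p" unfolding x_def using g2 assms(1) by simp
      have "g \<le> p" using gp assms(1) by (rule dvd_imp_le)
      then have x0: "x \<noteq> 0" unfolding x_def using g0 by (simp add: div_eq_0_iff)
      have "cc p q x = x * Q" using cc_lin[OF assms(1) d xp] unfolding Q_def .
      also have "\<dots> = p * (Q div g)" unfolding x_def using gp gQ by (auto elim!: dvdE)
      finally have "cc p q x mod p = 0" by simp
      then have "x \<in> Fb p q 0" unfolding Fb_def using xp by simp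
      then show False using F0 x0 by blast
    qed
    then show "p dvd q^2+1 \<and> gcd ((q^2+1) div p) p = 1" using d unfolding Q_def by simp
  qed
qed



lemma ceil_div_le:
  fixes A K p :: nat
  assumes "p > 0"
  shows "(A + p - 1) div p \<le> K \<longleftrightarrow> A \<le> p*K"
proof -
  have "(A + p - 1) div p \<le> K \<longleftrightarrow> (A + p - 1) div p < K + 1" by linarith
  also have "\<dots> \<longleftrightarrow> A + p - 1 < (K+1)*p" using assms by (simp add: div_less_iff_less_mult)
  also have "\<dots> \<longleftrightarrow> A \<le> p*K"
  proof -
    have "(K+1)*p = p*K + p" by simp
    then show ?thesis using assms by linarith
  qed
  finally show ?thesis .
qed

lemma KEY:
  assumes "p > 0"
  shows "cc p q x + p*j \<le> M \<longleftrightarrow> q^2*x + p^2*j \<le> p*M"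
proof (cases "p*j \<le> M")
  case True
  have "cc p q x + p*j \<le> M \<longleftrightarrow> cc p q x \<le> M - p*j" using True by linarith
  also have "\<dots> \<longleftrightarrow> q^2*x \<le> p*(M - p*j)" unfolding cc_def by (rule ceil_div_le[OF assms])
  also have "p*(M - p*j) = p*M - p^2*j" by (simp add: diff_mult_distrib2 power2_eq_square mult.assoc)
  also have "q^2*x \<le> p*M - p^2*j \<longleftrightarrow> q^2*x + p^2*j \<le> p*M"
  proof -
    have "p^2*j \<le> p*M" using True by (simp add: power2_eq_square mult.assoc)
    then show ?thesis by linarith
  qed
  finally show ?thesis .
next
  case False
  then have "p*M < p*(p*j)" using assms by simp
  then have "p*M < p^2*j" by (simp add: power2_eq_square mult.assoc)
  then show ?thesis using False by auto
qed

lemma A_fin: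
  assumes "p > 0" "q > 0"
  shows "finite {(x::nat,y::nat). q^2*x + p^2*y \<le> n}"
proof -
  have "{(x::nat,y::nat). q^2*x + p^2*y \<le> n} \<subseteq> {..n} \<times> {..n}"
  proof
    fix z assume "z \<in> {(x::nat,y::nat). q^2*x + p^2*y \<le> n}"
    then obtain x y where z: "z = (x,y)" "q^2*x + p^2*y \<le> n" by auto
    have "x \<le> q^2*x" using assms by simp
    moreover have "y \<le> p^2*y" using assms by simp
    ultimately have "x \<le> n" "y \<le> n" using z(2) by linarith+
    then show "z \<in> {..n} \<times> {..n}" using z(1) by auto
  qed
  then show ?thesis by (rule finite_subset) auto
qed

lemma recur:
  assumes p0: "p > 0" and q0: "q > 0"
  shows "cnt p q (p*q*(t+q)) + (q*t) mod p = cnt p q (p*q*t) + q*t + p + SS p q (q^2 + (q*t) mod p)"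
proof -
  define z where "z = (q*t) div p"
  define m where "m = (q*t) mod p"
  define n where "n = p*q*t"
  have qt: "q*t = p*z + m" unfolding z_def m_def by simp
  have mp: "m < p" unfolding m_def using p0 by simp
  have nz: "n = p^2*z + p*m" unfolding n_def using qt
    by (metis add_mult_distrib2 mult.assoc power2_eq_square)
  have n2: "p*q*(t+q) = n + p*q^2" unfolding n_def by (simp add: algebra_simps power2_eq_square)
  define A where "A = {(x::nat,y::nat). q^2*x + p^2*y \<le> n}"
  define A' where "A' = {(x::nat,y::nat). q^2*x + p^2*y \<le> n + p*q^2}"
  define A1 where "A1 = {(x,y). (x,y) \<in> A' \<and> y \<le> z}"
  define A2 where "A2 = {(x,y). (x,y) \<in> A' \<and> z < y}"
  define B where "B = ({..<p} \<times> {..z})"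
  define sh where "sh = (\<lambda>(x::nat,y::nat). (x+p, y))"
  define sh2 where "sh2 = (\<lambda>(x::nat,j::nat). (x, j+z))"
  have finA': "finite A'" unfolding A'_def by (rule A_fin[OF p0 q0])
  have finA: "finite A" unfolding A_def by (rule A_fin[OF p0 q0])
  have A'split: "A' = A1 \<union> A2" "A1 \<inter> A2 = {}" unfolding A1_def A2_def by auto
  have A1eq: "A1 = sh ` A \<union> B"
  proof (rule set_eqI)
    fix w :: "nat \<times> nat"
    obtain x y where w: "w = (x,y)" by (cases w)
    show "w \<in> A1 \<longleftrightarrow> w \<in> sh ` A \<union> B"
    proof
      assume "w \<in> A1"
      then have h: "q^2*x + p^2*y \<le> n + p*q^2" "y \<le> z" unfolding A1_def A'_def w by auto
      show "w \<in> sh ` A \<union> B"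
      proof (cases "x < p")
        case True then show ?thesis unfolding B_def w using h by auto
      next
        case False
        then have e: "q^2*(x-p) + q^2*p = q^2*x" by (metis add_mult_distrib2 le_add_diff_inverse2 not_less)
        have "q^2*p = p*q^2" by simp
        then have "q^2*(x-p) + p^2*y \<le> n" using h e by linarith
        then have "(x-p, y) \<in> A" unfolding A_def by simp
        moreover have "w = sh (x-p,y)" unfolding sh_def w using False by simp
        ultimately show ?thesis by blast
      qed
    next
      assume "w \<in> sh ` A \<union> B"
      then show "w \<in> A1"
      proof
        assume "w \<in> sh ` A"
        then obtain x0 where x0: "x = x0 + p" "(x0,y) \<in> A" unfolding sh_def w by auto
        then have h: "q^2*x0 + p^2*y \<le> n" unfolding A_def by auto
        have "q^2*x = q^2*x0 + p*q^2" using x0(1) by (simp add: algebra_simps)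
        then have "q^2*x + p^2*y \<le> n + p*q^2" using h by linarith
        moreover have "y \<le> z"
        proof -
          have pm: "p*m < p^2" using mp p0 by (simp add: power2_eq_square)
          have "p^2*(z+1) = p^2*z + p^2" by simp
          then have "p^2*y < p^2*(z+1)" using h nz pm by linarith
          then have "y < z+1" by (simp only: mult_less_cancel1)
          then show ?thesis by linarith
        qed
        ultimately show "w \<in> A1" unfolding A1_def A'_def w by auto
      next
        assume "w \<in> B"
        then have h: "x < p" "y \<le> z" unfolding B_def w by auto
        have "q^2*x \<le> q^2*p" using h by simp
        moreover have "p^2*y \<le> p^2*z" using h by simp
        moreover have "q^2*p = p*q^2" by simp
        ultimately have "q^2*x + p^2*y \<le> n + p*q^2" using nz by linarith
        then show "w \<in> A1" unfolding A1_def A'_def w using h by auto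
      qed
    qed
  qed
  have disj: "sh ` A \<inter> B = {}" unfolding sh_def B_def by auto
  have injsh: "inj_on sh A" unfolding sh_def by (auto simp: inj_on_def)
  have cA1: "card A1 = card A + p*(z+1)"
  proof -
    have "card A1 = card (sh ` A) + card B" unfolding A1eq
      using disj finA by (simp add: card_Un_disjoint B_def)
    also have "card (sh ` A) = card A" by (rule card_image[OF injsh])
    also have "card B = p*(z+1)" unfolding B_def by (simp add: card_cartesian_product)
    finally show ?thesis .
  qed
  have A2eq: "A2 = sh2 ` Sset p q (q^2+m)"
  proof (rule set_eqI)
    fix w :: "nat \<times> nat"
    obtain x y where w: "w = (x,y)" by (cases w)
    have key: "\<And>j. q^2*x + p^2*(j+z) \<le> n + p*q^2 \<longleftrightarrow> cc p q x + p*j \<le> q^2+m"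
    proof -
      fix j
      have "p^2*(j+z) = p^2*j + p^2*z" by (simp add: algebra_simps)
      moreover have "p*(q^2+m) = p*q^2 + p*m" by (simp add: algebra_simps)
      ultimately have "q^2*x + p^2*(j+z) \<le> n + p*q^2 \<longleftrightarrow> q^2*x + p^2*j \<le> p*(q^2+m)"
        using nz by linarith
      also have "\<dots> \<longleftrightarrow> cc p q x + p*j \<le> q^2+m" using KEY[OF p0] by simp
      finally show "q^2*x + p^2*(j+z) \<le> n + p*q^2 \<longleftrightarrow> cc p q x + p*j \<le> q^2+m" .
    qed
    show "w \<in> A2 \<longleftrightarrow> w \<in> sh2 ` Sset p q (q^2+m)"
    proof
      assume "w \<in> A2"
      then have h: "q^2*x + p^2*y \<le> n + p*q^2" "z < y" unfolding A2_def A'_def w by auto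
      have y: "y = (y - z) + z" using h by simp
      have "(x, y - z) \<in> Sset p q (q^2+m)" unfolding Sset_def using h key[of "y-z"] y by auto
      moreover have "w = sh2 (x, y-z)" unfolding sh2_def w using h by simp
      ultimately show "w \<in> sh2 ` Sset p q (q^2+m)" by blast
    next
      assume "w \<in> sh2 ` Sset p q (q^2+m)"
      then obtain j where j: "y = j + z" "(x,j) \<in> Sset p q (q^2+m)" unfolding sh2_def w by auto
      then have "1 \<le> j" "cc p q x + p*j \<le> q^2+m" unfolding Sset_def by auto
      then show "w \<in> A2" unfolding A2_def A'_def w using j key[of j] by auto
    qed
  qed
  have injsh2: "inj_on sh2 (Sset p q (q^2+m))" unfolding sh2_def by (auto simp: inj_on_def)
  have cA2: "card A2 = SS p q (q^2+m)" unfolding A2eq SS_def by (rule card_image[OF injsh2])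
  have "cnt p q (p*q*(t+q)) = card A'" unfolding cnt_def n2 A'_def ..
  also have "\<dots> = card A1 + card A2" using A'split finA' by (simp add: card_Un_disjoint)
  finally have "cnt p q (p*q*(t+q)) = cnt p q n + p*(z+1) + SS p q (q^2+m)"
    using cA1 cA2 unfolding cnt_def A_def by simp
  moreover have "p*(z+1) + m = q*t + p" using qt by simp
  ultimately show ?thesis unfolding m_def[symmetric] n_def by linarith
qed



lemma poly_periodic:
  fixes P :: "real poly" and p :: nat
  assumes p0: "p > 0" and per: "\<And>k. poly P (real (k+p)) = poly P (real k)"
  shows "poly P (real k) = poly P 0"
proof -
  define Z where "Z = P - [:poly P 0:]"
  have roots: "poly Z (real (j*p)) = 0" for j
  proof (induction j)
    case 0 then show ?case unfolding Z_def by simp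
  next
    case (Suc j)
    have "poly P (real (Suc j * p)) = poly P (real (j*p))" using per[of "j*p"] by (simp add: add.commute)
    then show ?case using Suc unfolding Z_def by simp
  qed
  have "Z = 0"
  proof (rule ccontr)
    assume "Z \<noteq> 0"
    then have fin: "finite {x. poly Z x = 0}" by (rule poly_roots_finite)
    have "range (\<lambda>j::nat. real (j*p)) \<subseteq> {x. poly Z x = 0}" using roots by auto
    moreover have "inj (\<lambda>j::nat. real (j*p))" using p0 by (auto simp: inj_on_def)
    then have "infinite (range (\<lambda>j::nat. real (j*p)))" by (simp add: range_inj_infinite)
    ultimately show False using fin finite_subset by blast
  qed
  then have Pc: "P = [:poly P 0:]" unfolding Z_def by simp
  have "poly P x = poly P 0" for x using arg_cong[OF Pc, of "\<lambda>Q. poly Q x"] by simp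
  then show ?thesis .
qed

lemma surj_mod:
  fixes p q :: nat
  assumes p0: "p > 0" and cp: "coprime p q" and m: "m < p"
  shows "\<exists>k. (q*((k+1)*q)) mod p = m"
proof -
  have "coprime (q^2) p" using cp by (simp add: coprime_commute)
  then obtain u where u: "(q^2*u) mod p = 1 mod p" using modinv by blast
  define k where "k = u*m + p - 1"
  have k1: "k + 1 = u*m + p" unfolding k_def using p0 by simp
  have "q*((k+1)*q) = q^2*u*m + p*q^2" unfolding k1 by (simp add: algebra_simps power2_eq_square)
  then have "(q*((k+1)*q)) mod p = (q^2*u*m) mod p" by simp
  also have "\<dots> = (((q^2*u) mod p) * m) mod p" by (rule mod_mult_left_eq[symmetric])
  also have "\<dots> = ((1 mod p) * m) mod p" using u by (simp only:)
  also have "\<dots> = (1 * m) mod p" by (rule mod_mult_left_eq)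
  also have "\<dots> = m" using m by simp
  finally show ?thesis by blast
qed

definition EC :: "nat \<Rightarrow> nat \<Rightarrow> bool" where
  "EC p q \<longleftrightarrow> (\<forall>m<p. SS p q (q^2+m) = SS p q (q^2) + m)"

lemma closed_form:
  assumes p0: "p > 0" and q0: "q > 0" and ec: "EC p q"
  shows "real (cnt p q (p*q*(r + k*q))) = real (cnt p q (p*q*r))
     + real k * (real q * real r + real (p + SS p q (q^2))) + real q^2 * real k * (real k - 1) / 2"
proof (induction k)
  case 0 then show ?case by simp
next
  case (Suc k)
  define t where "t = r + k*q"
  have mp: "(q*t) mod p < p" using p0 by simp
  have rec: "cnt p q (p*q*(t+q)) = cnt p q (p*q*t) + q*t + (p + SS p q (q^2))"
    using recur[OF p0 q0, of t] ec mp unfolding EC_def by simp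
  have "r + Suc k * q = t + q" unfolding t_def by simp
  then have "real (cnt p q (p*q*(r + Suc k*q))) = real (cnt p q (p*q*(t+q)))" by (simp only:)
  also have "\<dots> = real (cnt p q (p*q*t)) + real (q*t) + real (p + SS p q (q^2))"
    using rec by simp
  also have "real (q*t) = real q * (real r + real k * real q)" unfolding t_def by simp
  finally have "real (cnt p q (p*q*(r + Suc k*q))) = real (cnt p q (p*q*t)) + real q * (real r + real k * real q) + real (p + SS p q (q^2))" .
  then show ?case using Suc unfolding t_def by (simp add: field_simps power2_eq_square)
qed


lemma QP_from_EC:
  assumes p0: "p > 0" and q0: "q > 0" and ec: "EC p q"
  shows "quasi_period (\<lambda>t. real (cnt p q (p*q*t))) q"
proof -
  define e where "e = real (p + SS p q (q^2))"
  define C where "C = (\<lambda>r::nat. real (cnt p q (p*q*r)))"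
  define B where "B = (\<lambda>r::nat. real q * real r + e)"
  define c0 where "c0 = (\<lambda>r::nat. C r - real r * B r / real q + real r^2/2 + real q * real r/2)"
  define c1 where "c1 = (\<lambda>r::nat. B r / real q - real r - real q/2)"
  define c where "c = (\<lambda>(i::nat) (t::nat). if i = 0 then c0 (t mod q) else if i = 1 then c1 (t mod q) else 1/2)"
  have per: "\<forall>i\<le>2. \<forall>t. c i (t + q) = c i t" unfolding c_def by simp
  have eq: "\<forall>t\<ge>1. real (cnt p q (p*q*t)) = (\<Sum>i\<le>2. c i t * real t ^ i)"
  proof (intro allI impI)
    fix t :: nat
    define r where "r = t mod q"
    define k where "k = t div q"
    have t: "t = r + k*q" unfolding r_def k_def by simp
    have tr: "real t = real r + real k * real q" using t by simp
    have "real (cnt p q (p*q*t)) = C r + real k * B r + real q^2 * real k * (real k - 1) / 2"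
      using closed_form[OF p0 q0 ec, of r k] t unfolding C_def B_def e_def by simp
    also have "\<dots> = c0 r + c1 r * real t + 1/2 * real t^2"
      unfolding c0_def c1_def tr using q0 by (simp add: field_simps power2_eq_square)
    also have "\<dots> = (\<Sum>i\<le>2. c i t * real t ^ i)"
      unfolding c_def r_def by (simp add: numeral_2_eq_2)
    finally show "real (cnt p q (p*q*t)) = (\<Sum>i\<le>2. c i t * real t ^ i)" .
  qed
  show ?thesis unfolding quasi_period_def using per eq by blast
qed

lemma EC_from_QP:
  assumes p0: "p > 0" and q0: "q > 0" and cp: "coprime p q"
    and qp: "quasi_period (\<lambda>t. real (cnt p q (p*q*t))) q"
  shows "EC p q"
proof -
  obtain d c where per: "\<forall>i\<le>d. \<forall>t. c i (t + q) = c i t"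
    and eq: "\<forall>t\<ge>1. real (cnt p q (p*q*t)) = (\<Sum>i\<le>d. c i t * real t ^ i)"
    using qp unfolding quasi_period_def by blast
  have permult: "c i (k*q) = c i 0" if "i \<le> d" for i k
  proof (induction k)
    case 0 then show ?case by simp
  next
    case (Suc k)
    have "c i (Suc k * q) = c i (k*q + q)" by (simp add: add.commute)
    also have "\<dots> = c i (k*q)" using per that by blast
    finally show ?case using Suc by simp
  qed
  define P where "P = (\<Sum>i\<le>d. smult (c i 0) ([:real q, real q:]^i))"
  define h where "h = (\<lambda>k::nat. real (cnt p q (p*q*((k+1)*q))))"
  have hP: "h k = poly P (real k)" for k
  proof -
    have "h k = (\<Sum>i\<le>d. c i ((k+1)*q) * real ((k+1)*q) ^ i)"
      unfolding h_def using eq q0 by simp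
    also have "\<dots> = (\<Sum>i\<le>d. c i 0 * (real q + real q * real k) ^ i)"
    proof (rule sum.cong[OF refl])
      fix i assume i: "i \<in> {..d}"
      have "c i ((k+1)*q) = c i 0" using permult[of i "k+1"] i by simp
      moreover have "real ((k+1)*q) = real q + real q * real k" by (simp add: algebra_simps)
      ultimately show "c i ((k+1)*q) * real ((k+1)*q) ^ i = c i 0 * (real q + real q * real k) ^ i" by (simp only:)
    qed
    also have "\<dots> = poly P (real k)" unfolding P_def by (simp add: poly_sum mult.commute)
    finally show ?thesis .
  qed
  define M where "M = (\<lambda>k::nat. (q*((k+1)*q)) mod p)"
  define G where "G = (\<lambda>k::nat. real (SS p q (q^2 + M k)) - real (M k))"
  define Psi where "Psi = pcompose P [:1,1:] - P - [:0, real q^2:]"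
  have PsiG: "poly Psi (real k) = real q^2 + real p + G k" for k
  proof -
    have r: "cnt p q (p*q*((k+1)*q+q)) + M k = cnt p q (p*q*((k+1)*q)) + q*((k+1)*q) + p + SS p q (q^2 + M k)"
      using recur[OF p0 q0, of "(k+1)*q"] unfolding M_def .
    have e: "(k+1)*q+q = (Suc k + 1)*q" by simp
    have r': "cnt p q (p*q*((Suc k+1)*q)) + M k = cnt p q (p*q*((k+1)*q)) + q*((k+1)*q) + p + SS p q (q^2 + M k)"
      using r unfolding e .
    then have "real (cnt p q (p*q*((Suc k+1)*q)) + M k) = real (cnt p q (p*q*((k+1)*q)) + q*((k+1)*q) + p + SS p q (q^2 + M k))"
      by (rule arg_cong)
    then have "h (Suc k) + real (M k) = h k + real (q*((k+1)*q)) + real p + real (SS p q (q^2 + M k))"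
      unfolding h_def by (simp only: of_nat_add)
    then have "h (Suc k) = h k + real (q*((k+1)*q)) + real p + G k"
      unfolding G_def by linarith
    then have "h (Suc k) - h k - real q^2 * real k = real q^2 + real p + G k"
      by (simp add: algebra_simps power2_eq_square)
    moreover have "poly Psi (real k) = h (Suc k) - h k - real q^2 * real k"
      unfolding Psi_def hP by (simp add: poly_pcompose algebra_simps)
    ultimately show ?thesis by simp
  qed
  have Mper: "M (k+p) = M k" for k
  proof -
    have "q*((k+p+1)*q) = q*((k+1)*q) + p*q^2" by (simp add: algebra_simps power2_eq_square)
    then show ?thesis unfolding M_def by simp
  qed
  have "poly Psi (real (k+p)) = poly Psi (real k)" for k
    using PsiG[of "k+p"] PsiG[of k] Mper[of k] unfolding G_def by simp
  then have "poly Psi (real k) = poly Psi 0" for k by (rule poly_periodic[OF p0])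
  then have Gc: "G k = G 0" for k using PsiG[of k] PsiG[of 0] by simp
  from surj_mod[OF p0 cp p0] obtain k0 where "(q*((k0+1)*q)) mod p = 0" by (erule exE)
  then have k0: "M k0 = 0" unfolding M_def by simp
  show ?thesis unfolding EC_def
  proof (intro allI impI)
    fix m assume "m < p"
    from surj_mod[OF p0 cp this] obtain k where "(q*((k+1)*q)) mod p = m" by blast
    then have k: "M k = m" unfolding M_def by simp
    have "G k = G k0" using Gc[of k] Gc[of k0] by simp
    then have "real (SS p q (q^2 + m)) - real m = real (SS p q (q^2))"
      unfolding G_def using k k0 by simp
    then show "SS p q (q^2+m) = SS p q (q^2) + m" by linarith
  qed
qed


theorem theorem3p1:
  fixes p q :: nat
  assumes "p > 0" and "q > 0" and "coprime p q"
  shows "quasi_period (\<lambda>t. real (ehrhart (triangle (real p / real q) (real q / real p)) t)) q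
     \<longleftrightarrow> (p dvd (q^2 + 1) \<and> gcd ((q^2 + 1) div p) p = 1)"
proof -
  have f: "(\<lambda>t. real (ehrhart (triangle (real p / real q) (real q / real p)) t)) = (\<lambda>t. real (cnt p q (p*q*t)))"
    using ehr[OF assms(1,2)] by simp
  have "quasi_period (\<lambda>t. real (cnt p q (p*q*t))) q \<longleftrightarrow> EC p q"
    using QP_from_EC[OF assms(1,2)] EC_from_QP[OF assms] by blast
  also have "\<dots> \<longleftrightarrow> (\<forall>m. m+1 < p \<longrightarrow> card (Fb p q ((q^2+m+1) mod p)) = 1)"
    unfolding EC_def by (rule EC_iff[OF assms(1,2)])
  also have "\<dots> \<longleftrightarrow> (p dvd q^2+1 \<and> gcd ((q^2+1) div p) p = 1)"
    by (rule NT[OF assms])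
  finally show ?thesis unfolding f .
qed

end
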